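(* Let $E$ be a Banach $f$-algebra with order continuous norm and with a weak order unit $e$, and let $(x_\alpha)_{\alpha\in A}$ be a decreasing net in $E_+$. Then $x_\alpha\xrightarrow{mw}0$ if and only if $x_\alpha e\to0$ weakly.
   Context: All vector lattices are real and Archimedean. An $f$-algebra is a vector lattice with an associative multiplication making it an algebra, such that products of positive elements are positive and $x\wedge y=0$ implies $(xz)\wedge y=(zx)\wedge y=0$ for all $z\ge0$. A Banach $f$-algebra is an $f$-algebra which is a Banach lattice with $\|xy\|\le\|x\|\|y\|$. A net $(x_\alpha)$ in $E$ $mw$-converges to $x$ ($x_\alpha\xrightarrow{mw}x$) if $|x_\alpha-x|u\to0$ weakly for every $u\in E_+$. A weak order unit is an element $e>0$ whose generated band is all of $E$. *)

theory Defs
  imports Complex_Main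
begin

class banach_lattice_algebra = real_normed_algebra + banach + ordered_real_vector + lattice

definition labs :: "'a::{ab_group_add,lattice} \<Rightarrow> 'a" where
  "labs x = sup x (- x)"

definition is_sup_of :: "'a::order set \<Rightarrow> 'a \<Rightarrow> bool" where
  "is_sup_of D s \<longleftrightarrow> (\<forall>d\<in>D. d \<le> s) \<and> (\<forall>u. (\<forall>d\<in>D. d \<le> u) \<longrightarrow> s \<le> u)"

definition is_inf_of :: "'a::order set \<Rightarrow> 'a \<Rightarrow> bool" where
  "is_inf_of D s \<longleftrightarrow> (\<forall>d\<in>D. s \<le> d) \<and> (\<forall>l. (\<forall>d\<in>D. l \<le> d) \<longrightarrow> l \<le> s)"

definition banach_f_algebra :: "'a::banach_lattice_algebra itself \<Rightarrow> bool" where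
  "banach_f_algebra _ \<longleftrightarrow>
     \<comment> \<open>Archimedean\<close>
     (\<forall>x y::'a. 0 \<le> x \<and> 0 \<le> y \<and> (\<forall>n::nat. of_nat n *\<^sub>R x \<le> y) \<longrightarrow> x = 0) \<and>
     \<comment> \<open>Banach lattice norm\<close>
     (\<forall>x y::'a. labs x \<le> labs y \<longrightarrow> norm x \<le> norm y) \<and>
     \<comment> \<open>f-algebra\<close>
     (\<forall>x y::'a. 0 \<le> x \<and> 0 \<le> y \<longrightarrow> 0 \<le> x * y) \<and>
     (\<forall>x y z::'a. inf x y = 0 \<and> 0 \<le> z \<longrightarrow> inf (x * z) y = 0 \<and> inf (z * x) y = 0)"

text \<open>Order continuous norm: for every downward directed set D with infimum 0,
  inf of norms over D is 0 (i.e. the net (d)_{d in D} decreasing to 0 is norm-null).\<close>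
definition order_continuous_norm :: "'a::banach_lattice_algebra itself \<Rightarrow> bool" where
  "order_continuous_norm _ \<longleftrightarrow>
     (\<forall>D::'a set. D \<noteq> {} \<and> (\<forall>a\<in>D. \<forall>b\<in>D. \<exists>c\<in>D. c \<le> a \<and> c \<le> b) \<and> is_inf_of D 0
        \<longrightarrow> (\<forall>\<epsilon>>0. \<exists>d\<in>D. norm d < \<epsilon>))"

definition is_band :: "'a::banach_lattice_algebra set \<Rightarrow> bool" where
  "is_band B \<longleftrightarrow>
     0 \<in> B \<and> (\<forall>x\<in>B. \<forall>y\<in>B. x + y \<in> B) \<and> (\<forall>c. \<forall>x\<in>B. c *\<^sub>R x \<in> B) \<and>
     (\<forall>x\<in>B. \<forall>y. labs y \<le> labs x \<longrightarrow> y \<in> B) \<and>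
     (\<forall>D s. D \<subseteq> B \<and> is_sup_of D s \<longrightarrow> s \<in> B)"

definition band_generated :: "'a::banach_lattice_algebra set \<Rightarrow> 'a set" where
  "band_generated S = \<Inter>{B. is_band B \<and> S \<subseteq> B}"

definition weak_order_unit :: "'a::banach_lattice_algebra \<Rightarrow> bool" where
  "weak_order_unit e \<longleftrightarrow> 0 < e \<and> band_generated {e} = UNIV"

definition directed_index :: "'i::preorder itself \<Rightarrow> bool" where
  "directed_index _ \<longleftrightarrow> (\<forall>a b::'i. \<exists>c. a \<le> c \<and> b \<le> c)"

definition net_lim :: "('i::preorder \<Rightarrow> real) \<Rightarrow> real \<Rightarrow> bool" where
  "net_lim g l \<longleftrightarrow> (\<forall>\<epsilon>>0. \<exists>a. \<forall>b. a \<le> b \<longrightarrow> \<bar>g b - l\<bar> < \<epsilon>)"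

definition weak_conv :: "('i::preorder \<Rightarrow> 'a::real_normed_vector) \<Rightarrow> 'a \<Rightarrow> bool" where
  "weak_conv x l \<longleftrightarrow> (\<forall>f::'a \<Rightarrow> real. bounded_linear f \<longrightarrow> net_lim (\<lambda>a. f (x a)) (f l))"

definition mw_conv :: "('i::preorder \<Rightarrow> 'a::banach_lattice_algebra) \<Rightarrow> 'a \<Rightarrow> bool" where
  "mw_conv x l \<longleftrightarrow> (\<forall>u::'a. 0 \<le> u \<longrightarrow> weak_conv (\<lambda>a. labs (x a - l) * u) 0)"

end

theory Submission
  imports Defs "HOL-Library.Lattice_Algebras"
begin

definition hb_good :: "('a::real_vector \<Rightarrow> real) \<Rightarrow> 'a \<Rightarrow> ('a \<times> real) set \<Rightarrow> bool" where
  "hb_good p x0 G \<longleftrightarrow> (x0, p x0) \<in> G \<and>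
     (\<forall>x a y b. (x,a) \<in> G \<longrightarrow> (y,b) \<in> G \<longrightarrow> (x+y, a+b) \<in> G) \<and>
     (\<forall>x a c. (x,a) \<in> G \<longrightarrow> (c *\<^sub>R x, c*a) \<in> G) \<and>
     (\<forall>x a. (x,a) \<in> G \<longrightarrow> a \<le> p x)"

lemma hb_goodD:
  assumes "hb_good p x0 G"
  shows "(x0, p x0) \<in> G" "\<And>x a y b. (x,a) \<in> G \<Longrightarrow> (y,b) \<in> G \<Longrightarrow> (x+y, a+b) \<in> G"
    "\<And>x a c. (x,a) \<in> G \<Longrightarrow> (c *\<^sub>R x, c*a) \<in> G" "\<And>x a. (x,a) \<in> G \<Longrightarrow> a \<le> p x"
  using assms unfolding hb_good_def by blast+

lemma hahn_banach_sublinear: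
  fixes p :: "'a::real_vector \<Rightarrow> real"
  assumes sub: "\<And>x y. p (x+y) \<le> p x + p y"
    and hom: "\<And>c x. 0 \<le> c \<Longrightarrow> p (c *\<^sub>R x) = c * p x"
  shows "\<exists>f. (\<forall>x y. f (x+y) = f x + f y) \<and> (\<forall>c x. f (c *\<^sub>R x) = c * f x) \<and>
             (\<forall>x. f x \<le> p x) \<and> f x0 = p x0"
proof -
  have p0: "p 0 = 0" using hom[of 0 x0] by simp
  define A where "A = {G. hb_good p x0 G}"
  define G0 where "G0 = {(t *\<^sub>R x0, t * p x0) | t. True}"
  have G0A: "G0 \<in> A"
    unfolding A_def hb_good_def
  proof (intro CollectI conjI allI impI)
    show "(x0, p x0) \<in> G0" unfolding G0_def by (rule CollectI, rule exI[of _ 1]) simp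
  next
    fix x a y b assume "(x,a) \<in> G0" "(y,b) \<in> G0"
    then obtain s t where "x = s *\<^sub>R x0" "a = s * p x0" "y = t *\<^sub>R x0" "b = t * p x0"
      unfolding G0_def by auto
    then show "(x+y, a+b) \<in> G0" unfolding G0_def
      by (intro CollectI exI[of _ "s+t"]) (simp add: scaleR_add_left distrib_right)
  next
    fix x a c assume "(x,a) \<in> G0"
    then obtain s where "x = s *\<^sub>R x0" "a = s * p x0" unfolding G0_def by auto
    then show "(c *\<^sub>R x, c*a) \<in> G0" unfolding G0_def
      by (intro CollectI exI[of _ "c*s"]) simp
  next
    fix x a assume "(x,a) \<in> G0"
    then obtain s where xs: "x = s *\<^sub>R x0" "a = s * p x0" unfolding G0_def by auto
    show "a \<le> p x"
    proof (cases "0 \<le> s")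
      case True then show ?thesis using xs hom by simp
    next
      case False
      have "p 0 \<le> p x0 + p (- x0)" using sub[of x0 "-x0"] by simp
      then have "0 \<le> p x0 + p (- x0)" using p0 by simp
      moreover have "p x = (-s) * p (-x0)" using xs hom[of "-s" "-x0"] False by simp
      moreover have "0 \<le> -s" using False by simp
      ultimately have "0 \<le> (-s) * (p x0 + p (-x0))" by (metis mult_nonneg_nonneg)
      then have "s * p x0 \<le> (-s) * p (-x0)" by (simp add: algebra_simps)
      then show ?thesis using xs \<open>p x = _\<close> by simp
    qed
  qed
  have "\<forall>C\<in>chains A. \<exists>U\<in>A. \<forall>X\<in>C. X \<subseteq> U"
  proof
    fix C assume C: "C \<in> chains A"
    show "\<exists>U\<in>A. \<forall>X\<in>C. X \<subseteq> U"
    proof (cases "C = {}")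
      case True then show ?thesis using G0A by blast
    next
      case False
      have CA: "C \<subseteq> A" and ch: "\<And>X Y. X \<in> C \<Longrightarrow> Y \<in> C \<Longrightarrow> X \<subseteq> Y \<or> Y \<subseteq> X"
        using C unfolding chains_def chain_subset_def by auto
      have "\<Union>C \<in> A" unfolding A_def hb_good_def
      proof (intro CollectI conjI allI impI)
        obtain X where "X \<in> C" using False by blast
        moreover have "hb_good p x0 X" using \<open>X \<in> C\<close> CA unfolding A_def by auto
        ultimately show "(x0, p x0) \<in> \<Union>C" using hb_goodD(1) by blast
      next
        fix x a y b assume "(x,a) \<in> \<Union>C" "(y,b) \<in> \<Union>C"
        then obtain X Y where X: "X \<in> C" "(x,a) \<in> X" and Y: "Y \<in> C" "(y,b) \<in> Y" by blast
        have gX: "hb_good p x0 X" and gY: "hb_good p x0 Y" using X(1) Y(1) CA unfolding A_def by auto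
        from ch[OF X(1) Y(1)] show "(x+y, a+b) \<in> \<Union>C"
        proof
          assume "X \<subseteq> Y" then have "(x+y, a+b) \<in> Y" using hb_goodD(2)[OF gY] X(2) Y(2) by blast
          then show ?thesis using Y(1) by blast
        next
          assume "Y \<subseteq> X" then have "(x+y, a+b) \<in> X" using hb_goodD(2)[OF gX] X(2) Y(2) by blast
          then show ?thesis using X(1) by blast
        qed
      next
        fix x a c assume "(x,a) \<in> \<Union>C"
        then obtain X where "X \<in> C" "(x,a) \<in> X" by blast
        moreover have "hb_good p x0 X" using \<open>X \<in> C\<close> CA unfolding A_def by auto
        ultimately show "(c *\<^sub>R x, c*a) \<in> \<Union>C" using hb_goodD(3) by blast
      next
        fix x a assume "(x,a) \<in> \<Union>C"
        then obtain X where "X \<in> C" "(x,a) \<in> X" by blast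
        moreover have "hb_good p x0 X" using \<open>X \<in> C\<close> CA unfolding A_def by auto
        ultimately show "a \<le> p x" using hb_goodD(4) by blast
      qed
      then show ?thesis by blast
    qed
  qed
  from Zorn_Lemma2[OF this] obtain M where MA: "M \<in> A" and maxM: "\<And>X. X \<in> A \<Longrightarrow> M \<subseteq> X \<Longrightarrow> X = M"
    by blast
  have x0M: "(x0, p x0) \<in> M" and addM: "\<And>x a y b. (x,a) \<in> M \<Longrightarrow> (y,b) \<in> M \<Longrightarrow> (x+y, a+b) \<in> M"
    and smM: "\<And>x a c. (x,a) \<in> M \<Longrightarrow> (c *\<^sub>R x, c*a) \<in> M" and bdM: "\<And>x a. (x,a) \<in> M \<Longrightarrow> a \<le> p x"
    using MA hb_goodD unfolding A_def by auto
  have zM: "(0, 0) \<in> M" using smM[OF x0M, of 0] by simp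
  have uniq: "a = b" if "(x,a) \<in> M" "(x,b) \<in> M" for x a b
  proof -
    have "(x + (-1) *\<^sub>R x, a + (-1) * b) \<in> M" using addM[OF that(1) smM[OF that(2)]] .
    then have d: "(0, a - b) \<in> M" by simp
    have "a - b \<le> 0" using bdM[OF d] p0 by simp
    moreover have "(-1) * (a - b) \<le> 0" using bdM[OF smM[OF d, of "-1"]] p0 by simp
    ultimately show ?thesis by simp
  qed
  have total: "\<exists>a. (y, a) \<in> M" for y
  proof (rule ccontr)
    assume ny: "\<not> (\<exists>a. (y, a) \<in> M)"
    define S where "S = {a - p (x - y) | x a. (x,a) \<in> M}"
    have key: "a - p (x - y) \<le> p (z + y) - b" if "(x,a) \<in> M" "(z,b) \<in> M" for x a z b
    proof -
      have "a + b \<le> p (x + z)" using bdM[OF addM[OF that]] .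
      also have "\<dots> \<le> p (x - y) + p (z + y)" using sub[of "x - y" "z + y"] by (simp add: algebra_simps)
      finally show ?thesis by simp
    qed
    have Sne: "S \<noteq> {}" using zM unfolding S_def by blast
    have Sbdd: "bdd_above S" unfolding S_def bdd_above_def using key[OF _ zM] by auto
    define c where "c = Sup S"
    have cup: "a - p (x - y) \<le> c" if "(x,a) \<in> M" for x a
      unfolding c_def by (rule cSup_upper[OF _ Sbdd]) (use that S_def in blast)
    have clow: "c \<le> p (z + y) - b" if "(z,b) \<in> M" for z b
      unfolding c_def by (rule cSup_least[OF Sne]) (use that key S_def in blast)
    define M' where "M' = {(x + t *\<^sub>R y, a + t * c) | x a t. (x,a) \<in> M}"
    have MM': "M \<subseteq> M'" unfolding M'_def by force
    have "M' \<in> A" unfolding A_def hb_good_def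
    proof (intro CollectI conjI allI impI)
      show "(x0, p x0) \<in> M'" using MM' x0M by blast
    next
      fix x a x' a' assume "(x,a) \<in> M'" "(x',a') \<in> M'"
      then obtain u b t u' b' t' where "(u,b) \<in> M" "x = u + t *\<^sub>R y" "a = b + t * c"
          "(u',b') \<in> M" "x' = u' + t' *\<^sub>R y" "a' = b' + t' * c"
        unfolding M'_def by blast
      then have "(x+x', a+a') = ((u+u') + (t+t') *\<^sub>R y, (b+b') + (t+t') * c)" "(u+u', b+b') \<in> M"
        by (auto simp: addM algebra_simps)
      then show "(x+x', a+a') \<in> M'" unfolding M'_def by blast
    next
      fix x a k assume "(x,a) \<in> M'"
      then obtain u b t where ub: "(u,b) \<in> M" and "x = u + t *\<^sub>R y" "a = b + t * c"
        unfolding M'_def by blast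
      then have "(k *\<^sub>R x, k*a) = (k *\<^sub>R u + (k*t) *\<^sub>R y, k*b + (k*t) * c)"
        by (auto simp: algebra_simps)
      moreover have "(k *\<^sub>R u, k*b) \<in> M" using smM[OF ub] .
      ultimately show "(k *\<^sub>R x, k*a) \<in> M'" unfolding M'_def by blast
    next
      fix x a assume "(x,a) \<in> M'"
      then obtain u b t where ub: "(u,b) \<in> M" and xa: "x = u + t *\<^sub>R y" "a = b + t * c"
        unfolding M'_def by blast
      consider "t = 0" | "t > 0" | "t < 0" by linarith
      then show "a \<le> p x"
      proof cases
        case 1 then show ?thesis using xa bdM[OF ub] by simp
      next
        case 2
        have "c \<le> p ((1/t) *\<^sub>R u + y) - (1/t) * b" using clow[OF smM[OF ub, of "1/t"]] .
        then have "t * c \<le> t * (p ((1/t) *\<^sub>R u + y) - (1/t) * b)" using 2 by (simp add: mult_left_mono)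
        also have "\<dots> = t * p ((1/t) *\<^sub>R u + y) - b" using 2 by (simp add: algebra_simps)
        also have "t * p ((1/t) *\<^sub>R u + y) = p (t *\<^sub>R ((1/t) *\<^sub>R u + y))" using hom[of t] 2 by simp
        also have "t *\<^sub>R ((1/t) *\<^sub>R u + y) = x" using 2 xa by (simp add: scaleR_add_right)
        finally show ?thesis using xa by simp
      next
        case 3
        define s where "s = - t"
        have s: "s > 0" using 3 s_def by simp
        have "(1/s) * b - p ((1/s) *\<^sub>R u - y) \<le> c" using cup[OF smM[OF ub, of "1/s"]] .
        then have "s * ((1/s) * b - p ((1/s) *\<^sub>R u - y)) \<le> s * c" using s by (simp add: mult_left_mono)
        moreover have "s * ((1/s) * b - p ((1/s) *\<^sub>R u - y)) = b - s * p ((1/s) *\<^sub>R u - y)"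
          using s by (simp add: algebra_simps)
        moreover have "s * p ((1/s) *\<^sub>R u - y) = p (s *\<^sub>R ((1/s) *\<^sub>R u - y))" using hom[of s] s by simp
        moreover have "s *\<^sub>R ((1/s) *\<^sub>R u - y) = x" using s xa s_def by (simp add: scaleR_diff_right)
        ultimately show ?thesis using xa s_def by simp
      qed
    qed
    then have "M' = M" using maxM MM' by blast
    moreover have "(y, c) = (0 + 1 *\<^sub>R y, 0 + 1 * c)" by simp
    then have "(y, c) \<in> M'" unfolding M'_def using zM by blast
    ultimately show False using ny by blast
  qed
  define f where "f x = (SOME a. (x,a) \<in> M)" for x
  have fM: "(x, f x) \<in> M" for x unfolding f_def using total[of x] by (rule someI_ex)
  show ?thesis
  proof (intro exI[of _ f] conjI allI)
    fix x y show "f (x+y) = f x + f y" using uniq[OF fM addM[OF fM fM]] .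
  next
    fix c x show "f (c *\<^sub>R x) = c * f x" using uniq[OF fM smM[OF fM]] .
  next
    fix x show "f x \<le> p x" using bdM[OF fM] .
  next
    show "f x0 = p x0" using uniq[OF fM x0M] .
  qed
qed


subclass (in banach_lattice_algebra) lattice_ab_group_add ..

lemma labs_pos: "0 \<le> x \<Longrightarrow> labs (x::'a::banach_lattice_algebra) = x"
  unfolding labs_def by (simp add: sup_absorb1 order_trans[of "-x" 0 x])

lemma labs_ge: "x \<le> labs (x::'a::banach_lattice_algebra)" "- x \<le> labs x"
  unfolding labs_def by simp_all

lemma labs_nonneg: "0 \<le> labs (x::'a::banach_lattice_algebra)"
proof -
  have "x + - x \<le> labs x + labs x" using labs_ge[of x] by (rule add_mono)
  then show ?thesis by simp
qed

lemma labs_zero: "labs (0::'a::banach_lattice_algebra) = 0"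
  by (simp add: labs_pos)

lemma inf_add_le:
  fixes x a y :: "'a::banach_lattice_algebra"
  assumes "0 \<le> x" "0 \<le> a" "0 \<le> y"
  shows "inf x (a + y) \<le> inf x a + inf x y"
proof -
  have "inf x a + inf x y = inf (x + inf x y) (a + inf x y)" by (simp add: add_inf_distrib_right)
  also have "\<dots> = inf (inf (x + x) (x + y)) (inf (a + x) (a + y))"
    by (simp add: add_inf_distrib_left)
  also have "inf x (a + y) \<le> \<dots>"
  proof -
    have "x \<le> x + x" "x \<le> x + y" "x \<le> a + x" using assms by (simp_all add: add_increasing add_increasing2)
    moreover have "a + y \<le> a + y" by simp
    ultimately show ?thesis by (meson inf_le1 inf_le2 le_infI order_trans add_left_mono)
  qed
  finally show ?thesis .
qed

lemma disj_nat:
  fixes x w :: "'a::banach_lattice_algebra"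
  assumes "0 \<le> x" "0 \<le> w" "inf x w \<le> 0"
  shows "inf (of_nat n *\<^sub>R x) w \<le> 0"
proof (induction n)
  case 0 then show ?case using assms by (simp add: le_infI2)
next
  case (Suc n)
  have nn: "0 \<le> of_nat n *\<^sub>R x" using assms by (simp add: scaleR_nonneg_nonneg)
  have "inf (of_nat (Suc n) *\<^sub>R x) w = inf w (x + of_nat n *\<^sub>R x)"
    by (simp add: scaleR_add_left inf_commute add.commute)
  also have "\<dots> \<le> inf w x + inf w (of_nat n *\<^sub>R x)" using inf_add_le assms nn by blast
  also have "\<dots> \<le> 0" using Suc assms by (simp add: inf_commute add_nonpos_nonpos)
  finally show ?case .
qed

lemma disj_scale:
  fixes x w :: "'a::banach_lattice_algebra"
  assumes "0 \<le> x" "0 \<le> w" "inf x w \<le> 0" "0 \<le> k"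
  shows "inf (k *\<^sub>R x) w \<le> 0"
proof -
  obtain n :: nat where "k \<le> of_nat n" using real_arch_simple by blast
  then have "k *\<^sub>R x \<le> of_nat n *\<^sub>R x" using assms by (simp add: scaleR_right_mono)
  then have "inf (k *\<^sub>R x) w \<le> inf (of_nat n *\<^sub>R x) w" by (metis inf_mono order_refl)
  also have "\<dots> \<le> 0" using disj_nat assms by blast
  finally show ?thesis .
qed

lemma absorb:
  fixes x a y :: "'a::banach_lattice_algebra"
  assumes "0 \<le> x" "0 \<le> a" "0 \<le> y" "inf x y \<le> 0" "x \<le> a + y"
  shows "x \<le> a"
proof -
  have "x = inf x (a + y)" using assms by (simp add: inf_absorb1)
  also have "\<dots> \<le> inf x a + inf x y" using inf_add_le assms by blast
  also have "\<dots> \<le> inf x a + 0" using assms(4) by (rule add_left_mono)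
  also have "\<dots> \<le> a" by simp
  finally show ?thesis .
qed

lemma sup_disj:
  fixes s w :: "'a::banach_lattice_algebra"
  assumes "is_sup_of D s" "\<forall>d\<in>D. inf d w \<le> 0"
  shows "inf s w \<le> 0"
proof -
  have "d \<le> sup s w - w" if "d \<in> D" for d
  proof -
    have "d + w = sup d w + inf d w" by (rule add_eq_inf_sup)
    moreover have "sup d w \<le> sup s w" using assms(1) that unfolding is_sup_of_def by (meson sup_mono order_refl)
    ultimately have "d + w \<le> sup s w" using assms(2) that
      by (metis add.right_neutral add_mono)
    then show ?thesis by (simp add: le_diff_eq)
  qed
  then have "s \<le> sup s w - w" using assms(1) unfolding is_sup_of_def by blast
  then have "s + w \<le> sup s w" by (simp add: le_diff_eq)
  moreover have "s + w = sup s w + inf s w" by (rule add_eq_inf_sup)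
  ultimately show ?thesis by simp
qed

lemma band_disj:
  fixes w :: "'a::banach_lattice_algebra"
  assumes w0: "0 \<le> w"
  shows "is_band {y. inf (labs y) w \<le> 0}"
  unfolding is_band_def
proof (intro conjI ballI allI impI)
  show "0 \<in> {y. inf (labs y) w \<le> 0}" by (simp add: labs_zero le_infI1)
next
  fix x y assume x: "x \<in> {y. inf (labs y) w \<le> 0}" and y: "y \<in> {y. inf (labs y) w \<le> 0}"
  have "labs (x + y) \<le> labs x + labs y"
  proof -
    have "- (x + y) = - x + - y" by simp
    then show ?thesis
    unfolding labs_def[of "x+y"] using labs_ge[of x] labs_ge[of y]
    by (metis add_mono sup_least)
  qed
  then have "inf (labs (x + y)) w \<le> inf w (labs x + labs y)" by (metis inf_commute inf_mono order_refl)
  also have "\<dots> \<le> inf w (labs x) + inf w (labs y)" using inf_add_le labs_nonneg w0 by blast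
  also have "\<dots> \<le> 0" using x y by (simp add: inf_commute add_nonpos_nonpos)
  finally show "x + y \<in> {y. inf (labs y) w \<le> 0}" by simp
next
  fix c and x assume x: "x \<in> {y. inf (labs y) w \<le> 0}"
  have "labs (c *\<^sub>R x) \<le> \<bar>c\<bar> *\<^sub>R labs x"
  proof (cases "0 \<le> c")
    case True
    have "- (c *\<^sub>R x) = c *\<^sub>R (- x)" by simp
    then show ?thesis unfolding labs_def[of "c *\<^sub>R x"] using labs_ge[of x] True
      by (metis abs_of_nonneg scaleR_left_mono sup_least)
  next
    case False
    then have "c *\<^sub>R x = (-c) *\<^sub>R (-x)" "- (c *\<^sub>R x) = (-c) *\<^sub>R x" by simp_all
    moreover have "(-c) *\<^sub>R (-x) \<le> (-c) *\<^sub>R labs x" "(-c) *\<^sub>R x \<le> (-c) *\<^sub>R labs x"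
      using scaleR_left_mono[OF labs_ge(2)[of x], of "-c"] scaleR_left_mono[OF labs_ge(1)[of x], of "-c"] False
      by simp_all
    moreover have "\<bar>c\<bar> = -c" using False by simp
    ultimately show ?thesis unfolding labs_def[of "c *\<^sub>R x"] by (metis sup_least)
  qed
  then have "inf (labs (c *\<^sub>R x)) w \<le> inf (\<bar>c\<bar> *\<^sub>R labs x) w" by (metis inf_mono order_refl)
  also have "\<dots> \<le> 0" using x by (intro disj_scale labs_nonneg w0) simp_all
  finally show "c *\<^sub>R x \<in> {y. inf (labs y) w \<le> 0}" by simp
next
  fix x y assume x: "x \<in> {y. inf (labs y) w \<le> 0}" and "labs y \<le> labs x"
  then have 1: "inf (labs y) w \<le> inf (labs x) w" by (metis inf_mono order_refl)
  have 2: "inf (labs x) w \<le> 0" using x by simp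
  show "y \<in> {y. inf (labs y) w \<le> 0}" using order_trans[OF 1 2] by simp
next
  fix D s assume "D \<subseteq> {y. inf (labs y) w \<le> 0} \<and> is_sup_of D s"
  then have DB: "\<And>d. d \<in> D \<Longrightarrow> inf (labs d) w \<le> 0" and sD: "is_sup_of D s" by auto
  show "s \<in> {y. inf (labs y) w \<le> 0}"
  proof (cases "D = {}")
    case True
    then have "s \<le> s - w" using sD unfolding is_sup_of_def by blast
    then have "w \<le> 0" by simp
    then show ?thesis by (simp add: le_infI2)
  next
    case False
    then obtain d0 where d0: "d0 \<in> D" by blast
    have ind: "inf d w \<le> 0" if "d \<in> D" for d
      using DB[OF that] labs_ge(1)[of d] by (meson inf_mono order_refl order_trans)
    have "is_sup_of (insert 0 D) (sup s 0)" using sD unfolding is_sup_of_def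
      by (auto intro: le_supI1)
    moreover have "\<forall>d\<in>insert 0 D. inf d w \<le> 0" using ind w0 by (auto simp: le_infI1)
    ultimately have P: "inf (sup s 0) w \<le> 0" by (rule sup_disj)
    have "- s \<le> - d0" using sD d0 unfolding is_sup_of_def by simp
    then have "sup (- s) 0 \<le> labs d0" using labs_ge(2)[of d0] labs_nonneg[of d0]
      by (meson order_trans sup_least)
    then have N: "inf (sup (- s) 0) w \<le> 0" using DB[OF d0] by (meson inf_mono order_refl order_trans)
    have "s \<le> sup s 0 + sup (- s) 0" by (rule add_increasing2) simp_all
    moreover have "- s \<le> sup s 0 + sup (- s) 0" by (rule add_increasing) simp_all
    ultimately have "labs s \<le> sup s 0 + sup (- s) 0" unfolding labs_def by (rule sup_least)
    then have "inf (labs s) w \<le> inf w (sup s 0 + sup (- s) 0)" by (metis inf_commute inf_mono order_refl)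
    also have "\<dots> \<le> inf w (sup s 0) + inf w (sup (- s) 0)" by (rule inf_add_le[OF w0]) simp_all
    also have "\<dots> \<le> 0" using P N by (simp add: inf_commute add_nonpos_nonpos)
    finally show ?thesis by simp
  qed
qed

lemma weak_unit_disj:
  fixes e w :: "'a::banach_lattice_algebra"
  assumes "weak_order_unit e" "0 \<le> w" "inf w e \<le> 0"
  shows "w = 0"
proof -
  have e0: "0 \<le> e" using assms(1) unfolding weak_order_unit_def by (simp add: less_imp_le)
  let ?B = "{y. inf (labs y) w \<le> 0}"
  have "is_band ?B" using band_disj assms(2) .
  moreover have "{e} \<subseteq> ?B" using assms(3) e0 by (simp add: labs_pos inf_commute)
  ultimately have "band_generated {e} \<subseteq> ?B" unfolding band_generated_def by blast
  then have "w \<in> ?B" using assms(1) unfolding weak_order_unit_def by blast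
  then have "w \<le> 0" using assms(2) by (simp add: labs_pos)
  then show ?thesis using assms(2) by simp
qed


context
  fixes T :: "'a::banach_lattice_algebra itself"
  assumes bfa: "banach_f_algebra TYPE('a)"
begin

lemma bfa_arch: "0 \<le> x \<Longrightarrow> 0 \<le> y \<Longrightarrow> (\<forall>n::nat. of_nat n *\<^sub>R x \<le> y) \<Longrightarrow> x = (0::'a)"
  using bfa unfolding banach_f_algebra_def by blast

lemma bfa_norm: "labs x \<le> labs y \<Longrightarrow> norm x \<le> norm (y::'a)"
  using bfa unfolding banach_f_algebra_def by blast

lemma bfa_mult: "0 \<le> x \<Longrightarrow> 0 \<le> y \<Longrightarrow> 0 \<le> x * (y::'a)"
  using bfa unfolding banach_f_algebra_def by blast

lemma norm_mono_pos: "0 \<le> x \<Longrightarrow> x \<le> y \<Longrightarrow> norm x \<le> norm (y::'a)"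
  by (rule bfa_norm) (simp add: labs_pos order_trans[of 0 x y])

lemma norm_labs_eq: "norm (labs x) = norm (x::'a)"
  by (intro antisym bfa_norm) (simp_all add: labs_pos labs_nonneg)

lemma mult_mono_left': "0 \<le> x \<Longrightarrow> a \<le> b \<Longrightarrow> x * a \<le> x * (b::'a)"
  using bfa_mult[of x "b - a"] by (simp add: right_diff_distrib)

lemma mult_mono_right': "0 \<le> e \<Longrightarrow> a \<le> b \<Longrightarrow> a * e \<le> b * (e::'a)"
  using bfa_mult[of "b - a" e] by (simp add: left_diff_distrib)

lemma approx_unit:
  fixes e u :: 'a
  assumes ocn: "order_continuous_norm TYPE('a)" and wu: "weak_order_unit e" and u0: "0 \<le> u"
    and eps: "\<epsilon> > 0"
  shows "\<exists>n::nat. norm (u - inf u (of_nat n *\<^sub>R e)) < \<epsilon>"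
proof -
  have e0: "0 \<le> e" using wu unfolding weak_order_unit_def by (simp add: less_imp_le)
  define c where "c n = inf u (of_nat n *\<^sub>R e)" for n :: nat
  have c0: "0 \<le> c n" for n unfolding c_def using u0 e0 by (simp add: scaleR_nonneg_nonneg)
  have cu: "c n \<le> u" for n unfolding c_def by simp
  have cmono: "c n \<le> c m" if "n \<le> m" for n m
  proof -
    have "of_nat n *\<^sub>R e \<le> of_nat m *\<^sub>R e" using that e0 by (simp add: scaleR_right_mono)
    then show ?thesis unfolding c_def by (metis inf_mono order_refl)
  qed
  define D where "D = range (\<lambda>n. u - c n)"
  have "D \<noteq> {}" unfolding D_def by simp
  moreover have "\<forall>a\<in>D. \<forall>b\<in>D. \<exists>d\<in>D. d \<le> a \<and> d \<le> b"
  proof (intro ballI)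
    fix a b assume "a \<in> D" "b \<in> D"
    then obtain n m where "a = u - c n" "b = u - c m" unfolding D_def by blast
    then show "\<exists>d\<in>D. d \<le> a \<and> d \<le> b" unfolding D_def
      by (intro bexI[of _ "u - c (max n m)"]) (auto intro!: diff_left_mono cmono)
  qed
  moreover have "is_inf_of D 0" unfolding is_inf_of_def
  proof (intro conjI ballI allI impI)
    fix d assume "d \<in> D" then show "0 \<le> d" unfolding D_def using cu by auto
  next
    fix l assume lb: "\<forall>d\<in>D. l \<le> d"
    define w where "w = sup l 0"
    define t where "t = inf w e"
    have w0: "0 \<le> w" unfolding w_def by simp
    have t0: "0 \<le> t" unfolding t_def using w0 e0 by simp
    have wle: "w \<le> u - c n" for n
      unfolding w_def using lb cu[of n] unfolding D_def by (auto intro!: sup_least)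
    have "of_nat n *\<^sub>R t \<le> u" for n
    proof -
      have tl: "t \<le> u - c n" using wle[of n] unfolding t_def by (meson inf_le1 order_trans)
      have "c n \<le> of_nat n *\<^sub>R e" unfolding c_def by simp
      then have ee: "0 \<le> of_nat n *\<^sub>R e - c n" by (simp only: diff_ge_0_iff_ge)
      have "inf (u - c n) (of_nat n *\<^sub>R e - c n) = inf u (of_nat n *\<^sub>R e) + - c n"
        using add_inf_distrib_right[of u "of_nat n *\<^sub>R e" "- c n"] by (simp only: diff_conv_add_uminus)
      also have "\<dots> = 0" unfolding c_def by (rule add.right_inverse)
      finally have "inf t (of_nat n *\<^sub>R e - c n) \<le> 0" using tl by (metis inf_mono order_refl)
      then have dj: "inf (of_nat n *\<^sub>R t) (of_nat n *\<^sub>R e - c n) \<le> 0"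
        using disj_nat t0 ee by blast
      have "of_nat n *\<^sub>R t \<le> of_nat n *\<^sub>R e" unfolding t_def by (simp add: scaleR_left_mono)
      also have "\<dots> = c n + (of_nat n *\<^sub>R e - c n)" by simp
      finally have "of_nat n *\<^sub>R t \<le> c n"
        using absorb[OF _ c0 ee dj] t0 by (simp add: scaleR_nonneg_nonneg)
      then show ?thesis using cu[of n] by (rule order_trans)
    qed
    then have "t = 0" using bfa_arch t0 u0 by blast
    then have "w = 0" using weak_unit_disj[OF wu w0] unfolding t_def by simp
    then show "l \<le> 0" unfolding w_def by (metis sup_ge1)
  qed
  ultimately obtain d where "d \<in> D" "norm d < \<epsilon>" using ocn eps unfolding order_continuous_norm_def by blast
  then show ?thesis unfolding D_def c_def by auto
qed

lemma pos_functional: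
  fixes l :: 'a
  shows "\<exists>f. bounded_linear f \<and> (\<forall>y. 0 \<le> y \<longrightarrow> 0 \<le> f y) \<and> f l = norm (sup l 0)"
proof -
  define p where "p x = norm (sup x (0::'a))" for x
  have sub: "p (x + y) \<le> p x + p y" for x y
  proof -
    have "sup (x + y) 0 \<le> sup x 0 + sup y 0"
      by (rule sup_least) (simp_all add: add_mono add_nonneg_nonneg)
    then have "norm (sup (x + y) 0) \<le> norm (sup x 0 + sup y 0)"
      by (rule norm_mono_pos[rotated]) simp
    also have "\<dots> \<le> norm (sup x 0) + norm (sup y 0)" by (rule norm_triangle_ineq)
    finally show ?thesis unfolding p_def .
  qed
  have hom: "p (c *\<^sub>R x) = c * p x" if c: "0 \<le> c" for c x
  proof (cases "c = 0")
    case True then show ?thesis unfolding p_def by simp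
  next
    case False
    then have cp: "c > 0" using c by simp
    have "sup (c *\<^sub>R x) 0 = c *\<^sub>R sup x 0"
    proof (rule antisym)
      show "sup (c *\<^sub>R x) 0 \<le> c *\<^sub>R sup x 0"
        using c by (auto intro!: sup_least scaleR_left_mono scaleR_nonneg_nonneg)
      have "x \<le> inverse c *\<^sub>R sup (c *\<^sub>R x) 0"
      proof -
        have "x = inverse c *\<^sub>R (c *\<^sub>R x)" using cp by simp
        also have "\<dots> \<le> inverse c *\<^sub>R sup (c *\<^sub>R x) 0" using cp by (intro scaleR_left_mono) simp_all
        finally show ?thesis .
      qed
      moreover have "0 \<le> inverse c *\<^sub>R sup (c *\<^sub>R x) 0" using cp by (simp add: scaleR_nonneg_nonneg)
      ultimately have "sup x 0 \<le> inverse c *\<^sub>R sup (c *\<^sub>R x) 0" by (rule sup_least)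
      then have "c *\<^sub>R sup x 0 \<le> c *\<^sub>R (inverse c *\<^sub>R sup (c *\<^sub>R x) 0)" using cp by (intro scaleR_left_mono) simp_all
      then show "c *\<^sub>R sup x 0 \<le> sup (c *\<^sub>R x) 0" using cp by simp
    qed
    then show ?thesis unfolding p_def using c by simp
  qed
  obtain f where fadd: "\<And>x y. f (x + y) = f x + f y" and fsc: "\<And>c x. f (c *\<^sub>R x) = c * f x"
    and fp: "\<And>x. f x \<le> p x" and fl: "f l = p l"
    using hahn_banach_sublinear[of p l, OF sub hom] by blast
  have pn: "p x \<le> norm x" for x
  proof -
    have "p x \<le> norm (labs x)" unfolding p_def
      by (rule norm_mono_pos) (simp_all add: labs_nonneg labs_ge)
    then show ?thesis by (simp add: norm_labs_eq)
  qed
  have fneg: "f (- x) = - f x" for x using fsc[of "-1" x] by simp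
  have "bounded_linear f"
  proof (rule bounded_linear_intro[where K = 1])
    show "f (x + y) = f x + f y" for x y by (rule fadd)
    show "f (r *\<^sub>R x) = r *\<^sub>R f x" for r x using fsc by simp
    show "norm (f x) \<le> norm x * 1" for x
    proof -
      have "f x \<le> norm x" using fp[of x] pn[of x] by simp
      moreover have "- f x \<le> norm x" using fp[of "-x"] pn[of "-x"] fneg[of x] by simp
      ultimately show ?thesis by simp
    qed
  qed
  moreover have "0 \<le> f y" if "0 \<le> y" for y
  proof -
    have "f (- y) \<le> p (- y)" by (rule fp)
    also have "p (- y) = 0" unfolding p_def using that by (simp add: sup_absorb2)
    finally show ?thesis using fneg by simp
  qed
  ultimately show ?thesis using fl unfolding p_def by blast
qed

lemma weak_to_norm:
  fixes z :: "'i::preorder \<Rightarrow> 'a"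
  assumes ocn: "order_continuous_norm TYPE('a)" and dir: "directed_index TYPE('i)"
    and dec: "\<forall>a b. a \<le> b \<longrightarrow> z b \<le> z a" and pos: "\<forall>a. 0 \<le> z a"
    and wc: "weak_conv z 0" and eps: "\<epsilon> > 0"
  shows "\<exists>a. \<forall>b. a \<le> b \<longrightarrow> norm (z b) < \<epsilon>"
proof -
  define D where "D = range z"
  have "D \<noteq> {}" unfolding D_def by simp
  moreover have "\<forall>a\<in>D. \<forall>b\<in>D. \<exists>d\<in>D. d \<le> a \<and> d \<le> b"
  proof (intro ballI)
    fix a b assume "a \<in> D" "b \<in> D"
    then obtain i j where ij: "a = z i" "b = z j" unfolding D_def by blast
    obtain k where "i \<le> k" "j \<le> k" using dir unfolding directed_index_def by blast
    then have "z k \<le> a" "z k \<le> b" using dec ij by blast+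
    moreover have "z k \<in> D" unfolding D_def by simp
    ultimately show "\<exists>d\<in>D. d \<le> a \<and> d \<le> b" by blast
  qed
  moreover have "is_inf_of D 0" unfolding is_inf_of_def
  proof (intro conjI ballI allI impI)
    fix d assume "d \<in> D" then show "0 \<le> d" unfolding D_def using pos by auto
  next
    fix l assume lb: "\<forall>d\<in>D. l \<le> d"
    show "l \<le> 0"
    proof (rule ccontr)
      assume nl: "\<not> l \<le> 0"
      obtain f where fff: "bounded_linear f \<and> (\<forall>y. 0 \<le> y \<longrightarrow> 0 \<le> f y) \<and> f l = norm (sup l 0)"
        using pos_functional[of l] by (elim exE)
      have bf: "bounded_linear f" using fff by (rule conjunct1)
      have fpos: "\<forall>y. 0 \<le> y \<longrightarrow> 0 \<le> f y" using fff by (rule conjunct2[THEN conjunct1])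
      have fl: "f l = norm (sup l 0)" using fff by (rule conjunct2[THEN conjunct2])
      have "sup l 0 \<noteq> 0"
      proof
        assume "sup l 0 = 0" then have "l \<le> 0" by (metis sup_ge1)
        with nl show False by (rule notE)
      qed
      then have "norm (sup l 0) > 0" by (rule zero_less_norm_iff[THEN iffD2])
      then have fl0: "f l > 0" unfolding fl .
      have f0: "f 0 = 0" by (rule linear_0[OF bounded_linear.linear[OF bf]])
      have nl': "net_lim (\<lambda>a. f (z a)) (f 0)" using wc[unfolded weak_conv_def, rule_format, OF bf] .
      have "\<exists>a. \<forall>b. a \<le> b \<longrightarrow> \<bar>f (z b) - f 0\<bar> < f l"
        using nl'[unfolded net_lim_def, rule_format, OF fl0] .
      then obtain a where "\<forall>b. a \<le> b \<longrightarrow> \<bar>f (z b) - f 0\<bar> < f l" by blast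
      then have "\<bar>f (z a) - f 0\<bar> < f l" by blast
      then have "\<bar>f (z a)\<bar> < f l" using f0 by simp
      moreover have "f (z a) - f l = f (z a - l)" by (rule linear_diff[OF bounded_linear.linear[OF bf], symmetric])
      moreover have "0 \<le> f (z a - l)"
      proof -
        have "l \<le> z a" using lb unfolding D_def by blast
        then have "0 \<le> z a - l" by (simp only: diff_ge_0_iff_ge)
        then show ?thesis using fpos by blast
      qed
      ultimately show False by linarith
    qed
  qed
  ultimately obtain d where "d \<in> D" "norm d < \<epsilon>" using ocn eps unfolding order_continuous_norm_def by blast
  then obtain a where a: "norm (z a) < \<epsilon>" unfolding D_def by blast
  have "norm (z b) < \<epsilon>" if "a \<le> b" for b
  proof -
    have "z b \<le> z a" using dec that by blast
    moreover have "0 \<le> z b" using pos by blast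
    ultimately have "norm (z b) \<le> norm (z a)" by (rule norm_mono_pos[rotated])
    then show ?thesis using a by linarith
  qed
  then show ?thesis by blast
qed

end

theorem corollary2p10:
  fixes e :: "'a::banach_lattice_algebra" and x :: "'i::preorder \<Rightarrow> 'a"
  assumes "banach_f_algebra TYPE('a)"
    and "order_continuous_norm TYPE('a)"
    and "weak_order_unit e"
    and "directed_index TYPE('i)"
    and "\<forall>a b. a \<le> b \<longrightarrow> x b \<le> x a"
    and "\<forall>a. 0 \<le> x a"
  shows "mw_conv x 0 \<longleftrightarrow> weak_conv (\<lambda>a. x a * e) 0"
proof -
  note bfa = assms(1) and ocn = assms(2) and wu = assms(3) and dir = assms(4)
    and dec = assms(5) and pos = assms(6)
  have e0: "0 \<le> e" using wu unfolding weak_order_unit_def by (simp add: less_imp_le)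
  have lx: "labs (x a - 0) = x a" for a using pos by (simp add: labs_pos)
  show ?thesis
  proof
    assume "mw_conv x 0"
    then have "weak_conv (\<lambda>a. labs (x a - 0) * e) 0" unfolding mw_conv_def using e0 by blast
    then show "weak_conv (\<lambda>a. x a * e) 0" unfolding lx .
  next
    assume wc: "weak_conv (\<lambda>a. x a * e) 0"
    have zdec: "\<forall>a b. a \<le> b \<longrightarrow> x b * e \<le> x a * e"
      using dec mult_mono_right'[OF bfa e0] by blast
    have zpos: "\<forall>a. 0 \<le> x a * e" using pos bfa_mult[OF bfa] e0 by blast
    have znorm: "\<exists>a. \<forall>b. a \<le> b \<longrightarrow> norm (x b * e) < \<delta>" if "\<delta> > 0" for \<delta>
      using weak_to_norm[OF bfa ocn dir zdec zpos wc that] .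
    show "mw_conv x 0" unfolding mw_conv_def
    proof (intro allI impI)
      fix u :: 'a assume u0: "0 \<le> u"
      show "weak_conv (\<lambda>a. labs (x a - 0) * u) 0" unfolding weak_conv_def net_lim_def lx
      proof (intro allI impI)
        fix f :: "'a \<Rightarrow> real" and \<epsilon> :: real assume bf: "bounded_linear f" and eps: "\<epsilon> > 0"
        obtain K where K: "K > 0" "\<And>y. norm (f y) \<le> norm y * K"
          using bounded_linear.pos_bounded[OF bf] by blast
        have f0: "f 0 = 0" by (rule linear_0[OF bounded_linear.linear[OF bf]])
        define \<delta> where "\<delta> = \<epsilon> / K"
        have dpos: "\<delta> > 0" unfolding \<delta>_def using eps K by simp
        obtain a0 :: 'i where True by simp
        define Mx where "Mx = norm (x a0) + 1"
        have Mx: "Mx > 0" unfolding Mx_def by (simp add: add_nonneg_pos)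
        obtain n :: nat where n: "norm (u - inf u (of_nat n *\<^sub>R e)) < \<delta> / (2 * Mx)"
          using approx_unit[OF bfa ocn wu u0, of "\<delta> / (2 * Mx)"] dpos Mx by (meson divide_pos_pos mult_pos_pos zero_less_numeral)
        define c where "c = inf u (of_nat n *\<^sub>R e)"
        have c0: "0 \<le> c" unfolding c_def using u0 e0 by (simp add: scaleR_nonneg_nonneg)
        have cle: "c \<le> of_nat n *\<^sub>R e" unfolding c_def by simp
        obtain a1 where a1: "\<forall>b. a1 \<le> b \<longrightarrow> norm (x b * e) < \<delta> / (2 * (of_nat n + 1))"
        proof -
          have "\<delta> / (2 * (of_nat n + 1)) > 0" using dpos by simp
          then show ?thesis using znorm that by blast
        qed
        obtain a where a: "a0 \<le> a" "a1 \<le> a" using dir unfolding directed_index_def by blast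
        have "\<bar>f (x b * u) - f 0\<bar> < \<epsilon>" if ab: "a \<le> b" for b
        proof -
          have b0: "a0 \<le> b" "a1 \<le> b" using a ab order_trans by blast+
          have "norm (x b) \<le> norm (x a0)" using norm_mono_pos[OF bfa] pos dec b0 by blast
          then have nxb: "norm (x b) \<le> Mx" unfolding Mx_def by simp
          have "norm (x b * (u - c)) \<le> norm (x b) * norm (u - c)" by (rule norm_mult_ineq)
          also have "\<dots> \<le> Mx * norm (u - c)" using nxb by (simp add: mult_right_mono)
          also have "\<dots> \<le> Mx * (\<delta> / (2 * Mx))" unfolding c_def by (rule mult_left_mono[OF less_imp_le[OF n]]) (use Mx in simp)
          also have "\<dots> = \<delta> / 2" using Mx by simp
          finally have P1: "norm (x b * (u - c)) \<le> \<delta> / 2" .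
          have "0 \<le> x b * c" using bfa_mult[OF bfa] pos c0 by blast
          moreover have "x b * c \<le> x b * (of_nat n *\<^sub>R e)" using mult_mono_left'[OF bfa] pos cle by blast
          ultimately have "norm (x b * c) \<le> norm (x b * (of_nat n *\<^sub>R e))" using norm_mono_pos[OF bfa] by blast
          also have "\<dots> = of_nat n * norm (x b * e)" by simp
          also have "\<dots> \<le> of_nat n * (\<delta> / (2 * (of_nat n + 1)))"
            using a1 b0 by (intro mult_left_mono) (auto simp: less_imp_le)
          also have "\<dots> < \<delta> / 2" using dpos by (simp add: field_simps)
          finally have P2: "norm (x b * c) < \<delta> / 2" .
          have "x b * u = x b * (u - c) + x b * c" by (simp add: right_diff_distrib)
          then have "norm (x b * u) \<le> norm (x b * (u - c)) + norm (x b * c)" by (simp add: norm_triangle_ineq)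
          then have nb: "norm (x b * u) < \<delta>" using P1 P2 by simp
          have "\<bar>f (x b * u)\<bar> \<le> norm (x b * u) * K" using K(2)[of "x b * u"] by simp
          also have "\<dots> < \<delta> * K" using nb K by simp
          also have "\<dots> = \<epsilon>" unfolding \<delta>_def using K by simp
          finally show ?thesis using f0 by simp
        qed
        then show "\<exists>a. \<forall>b. a \<le> b \<longrightarrow> \<bar>f (x b * u) - f 0\<bar> < \<epsilon>" by blast
      qed
    qed
  qed
qed

end
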